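(* Let $T_{a_1\dots a_r}$ be a rank-$r$ tensor and $i\in\{1,\dots,r\}$. Then $(T\,{}_i\!\times_i T)=0$ if and only if there exist a null vector $k$ (or $T=0$) and a rank-$(r-1)$ tensor $t$ such that $T_{a_1\dots a_r}=k_{a_i}\,t_{a_1\dots a_{i-1}a_{i+1}\dots a_r}$.
   Context: Lorentzian metric of signature $(+,-,\dots,-)$; null: $k\ne0$, $k\cdot k=0$. $(T\,{}_i\!\times_i T)_{a_1\dots a_{2r-2}}$ denotes the tensor obtained from $T\otimes T$ by contracting the $i$-th index of the first factor with the $i$-th index of the second factor, all other indices kept in order: $T_{a_1\dots a_{i-1}ba_i\dots a_{r-1}}T_{a_r\dots a_{r+i-2}}{}^{b}{}_{a_{r+i-1}\dots a_{2r-2}}$. *)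

theory Defs
  imports Complex_Main
begin

text \<open>Tensors on an n-dimensional real space with the Minkowski metric
  diag(+1,-1,...,-1) in a fixed orthonormal basis (index 0 = time).
  A rank-r tensor is given by its components (all indices down) as a
  function on index lists; only lists of length r with entries < n matter.\<close>

definition eta :: "nat \<Rightarrow> real" where
  "eta a = (if a = 0 then 1 else -1)"

definition valid_idx :: "nat \<Rightarrow> nat \<Rightarrow> nat list \<Rightarrow> bool" where
  "valid_idx n r as \<longleftrightarrow> length as = r \<and> (\<forall>a\<in>set as. a < n)"

definition ins_at :: "nat \<Rightarrow> nat \<Rightarrow> nat list \<Rightarrow> nat list" where
  "ins_at j b xs = take j xs @ b # drop j xs"

text \<open>(T i-times-i T) for a rank-r tensor T and 1 <= i <= r, evaluated at a
  list of 2r-2 indices: the first r-1 go to the first factor, the rest to the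
  second, and the contracted index b sits at position i in both factors
  (raised with the inverse metric, which equals eta since it is diagonal).\<close>
definition contr :: "nat \<Rightarrow> nat \<Rightarrow> nat \<Rightarrow> (nat list \<Rightarrow> real) \<Rightarrow> nat list \<Rightarrow> real" where
  "contr n r i T as =
     (\<Sum>b<n. eta b * T (ins_at (i - 1) b (take (r - 1) as))
                   * T (ins_at (i - 1) b (drop (r - 1) as)))"

definition mdot :: "nat \<Rightarrow> (nat \<Rightarrow> real) \<Rightarrow> (nat \<Rightarrow> real) \<Rightarrow> real" where
  "mdot n k l = (\<Sum>a<n. eta a * k a * l a)"

definition null_vec :: "nat \<Rightarrow> (nat \<Rightarrow> real) \<Rightarrow> bool" where
  "null_vec n k \<longleftrightarrow> (\<exists>a<n. k a \<noteq> 0) \<and> mdot n k k = 0"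

end

theory Submission
  imports Defs
begin

lemma ins_at_nth: "j \<le> length c \<Longrightarrow> ins_at j b c ! j = b"
  by (simp add: ins_at_def nth_append)

lemma ins_at_rem: "j \<le> length c \<Longrightarrow> take j (ins_at j b c) @ drop (Suc j) (ins_at j b c) = c"
  by (simp add: ins_at_def)

lemma ins_at_valid:
  assumes "valid_idx n m c" "b < n" "j \<le> m"
  shows "valid_idx n (Suc m) (ins_at j b c)"
  using assms unfolding valid_idx_def ins_at_def
  by (auto dest: in_set_takeD in_set_dropD)

lemma rem_valid:
  assumes "valid_idx n (Suc m) as" "j \<le> m"
  shows "valid_idx n m (take j as @ drop (Suc j) as)"
  using assms unfolding valid_idx_def
  by (auto dest: in_set_takeD in_set_dropD)

lemma ins_at_inv: "j < length as \<Longrightarrow> ins_at j (as ! j) (take j as @ drop (Suc j) as) = as"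
  by (simp add: ins_at_def id_take_nth_drop[symmetric])

lemma null_zero:
  assumes "mdot n w w = 0" "w 0 = 0"
  shows "\<forall>a<n. w a = 0"
proof -
  have "(\<Sum>a<n. eta a * w a * w a) = (\<Sum>a<n. - ((w a)^2))"
    by (rule sum.cong) (auto simp: eta_def assms(2) power2_eq_square)
  hence "(\<Sum>a<n. (w a)^2) = 0" using assms(1) unfolding mdot_def
    by (simp add: sum_negf)
  hence "\<forall>a\<in>{..<n}. (w a)^2 = 0"
    by (subst sum_nonneg_eq_0_iff[symmetric]) auto
  thus ?thesis by auto
qed

lemma null_prop:
  assumes "mdot n u u = 0" "mdot n v v = 0" "mdot n u v = 0" "u 0 \<noteq> 0"
  shows "\<forall>a<n. v a = v 0 / u 0 * u a"
proof -
  define w where "w a = v 0 * u a - u 0 * v a" for a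
  have "mdot n w w = (\<Sum>a<n. (v 0)^2*(eta a*u a*u a) - 2*u 0*v 0*(eta a*u a*v a) + (u 0)^2*(eta a * v a * v a))"
    unfolding mdot_def by (rule sum.cong) (auto simp: w_def algebra_simps power2_eq_square)
  also have "\<dots> = (v 0)^2 * mdot n u u - 2*u 0*v 0*mdot n u v + (u 0)^2 * mdot n v v"
    unfolding mdot_def by (simp add: sum.distrib sum_subtractf sum_distrib_left)
  finally have "mdot n w w = 0" using assms by simp
  moreover have "w 0 = 0" by (simp add: w_def)
  ultimately have "\<forall>a<n. w a = 0" by (rule null_zero)
  thus ?thesis using assms(4) by (auto simp: w_def field_simps)
qed

theorem mainTheorem14:
  fixes n r i :: nat and T :: "nat list \<Rightarrow> real"
  assumes "2 \<le> n" and "1 \<le> i" and "i \<le> r"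
  shows "(\<forall>as. valid_idx n (2 * r - 2) as \<longrightarrow> contr n r i T as = 0) \<longleftrightarrow>
         ((\<forall>as. valid_idx n r as \<longrightarrow> T as = 0) \<or>
          (\<exists>k t. null_vec n k \<and>
             (\<forall>as. valid_idx n r as \<longrightarrow>
                T as = k (as ! (i - 1)) * t (take (i - 1) as @ drop i as))))"
proof -
  obtain m where rm: "r = Suc m" using assms by (cases r) auto
  define j where "j = i - 1"
  have ij: "i = Suc j" "j \<le> m" using assms rm by (auto simp: j_def)
  have r2: "2 * r - 2 = m + m" using rm by simp
  define col where "col c b = T (ins_at j b c)" for c b
  have contr_eq: "contr n r i T as = mdot n (col (take m as)) (col (drop m as))" for as
    unfolding contr_def mdot_def col_def j_def rm by (simp add: mult.assoc)
  have T_col: "T as = col (take j as @ drop i as) (as ! j)" if "valid_idx n r as" for as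
    using that ins_at_inv[of j as] ij rm unfolding col_def valid_idx_def by simp
  have ins_len: "valid_idx n m c \<Longrightarrow> j \<le> length c" for c
    using ij by (simp add: valid_idx_def)
  show ?thesis
  proof
    assume C: "\<forall>as. valid_idx n (2 * r - 2) as \<longrightarrow> contr n r i T as = 0"
    have M: "mdot n (col c) (col d) = 0" if "valid_idx n m c" "valid_idx n m d" for c d
    proof -
      have "valid_idx n (2*r-2) (c @ d)" using that r2 by (auto simp: valid_idx_def)
      hence "contr n r i T (c @ d) = 0" using C by blast
      thus ?thesis using contr_eq[of "c @ d"] that by (simp add: valid_idx_def)
    qed
    show "(\<forall>as. valid_idx n r as \<longrightarrow> T as = 0) \<or>
          (\<exists>k t. null_vec n k \<and>
             (\<forall>as. valid_idx n r as \<longrightarrow>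
                T as = k (as ! (i - 1)) * t (take (i - 1) as @ drop i as)))"
    proof (cases "\<forall>as. valid_idx n r as \<longrightarrow> T as = 0")
      case True thus ?thesis by blast
    next
      case False
      then obtain as0 where v0: "valid_idx n r as0" and nz: "T as0 \<noteq> 0" by blast
      define c0 where "c0 = take j as0 @ drop i as0"
      have c0v: "valid_idx n m c0" using rem_valid[of n m as0 j] v0 ij rm by (simp add: c0_def)
      define k where "k = col c0"
      have kk: "mdot n k k = 0" using M c0v k_def by simp
      have "k (as0 ! j) \<noteq> 0" using T_col[OF v0] nz by (simp add: k_def c0_def)
      moreover have "as0 ! j < n" using v0 ij rm by (auto simp: valid_idx_def)
      ultimately have kex: "\<exists>a<n. k a \<noteq> 0" by blast
      have k0: "k 0 \<noteq> 0" using null_zero[OF kk] kex by blast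
      define t where "t c = col c 0 / k 0" for c
      have "\<forall>as. valid_idx n r as \<longrightarrow> T as = k (as ! (i - 1)) * t (take (i - 1) as @ drop i as)"
      proof (intro allI impI)
        fix as assume va: "valid_idx n r as"
        define c where "c = take j as @ drop i as"
        have cv: "valid_idx n m c" using rem_valid[of n m as j] va ij rm by (simp add: c_def)
        have P: "\<forall>a<n. col c a = col c 0 / k 0 * k a"
          by (rule null_prop[OF kk M[OF cv cv] _ k0]) (use M[OF c0v cv] k_def in simp)
        have "as ! j < n" using va ij rm by (auto simp: valid_idx_def)
        hence "col c (as ! j) = col c 0 / k 0 * k (as ! j)" using P by blast
        hence "T as = k (as ! j) * t c" using T_col[OF va] by (simp add: c_def t_def)
        thus "T as = k (as ! (i - 1)) * t (take (i - 1) as @ drop i as)"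
          by (simp add: c_def j_def)
      qed
      thus ?thesis using kk kex unfolding null_vec_def by blast
    qed
  next
    assume H: "(\<forall>as. valid_idx n r as \<longrightarrow> T as = 0) \<or>
          (\<exists>k t. null_vec n k \<and>
             (\<forall>as. valid_idx n r as \<longrightarrow>
                T as = k (as ! (i - 1)) * t (take (i - 1) as @ drop i as)))"
    show "\<forall>as. valid_idx n (2 * r - 2) as \<longrightarrow> contr n r i T as = 0"
    proof (intro allI impI)
      fix as assume va: "valid_idx n (2 * r - 2) as"
      define c where "c = take m as"
      define d where "d = drop m as"
      have cv: "valid_idx n m c" and dv: "valid_idx n m d" using va r2
        by (auto simp: valid_idx_def c_def d_def dest: in_set_takeD in_set_dropD)
      have vins: "valid_idx n r (ins_at j b e)" if "valid_idx n m e" "b < n" for e b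
        using ins_at_valid[OF that ij(2)] rm by simp
      from H show "contr n r i T as = 0"
      proof
        assume Z: "\<forall>as. valid_idx n r as \<longrightarrow> T as = 0"
        have "\<forall>b<n. col c b = 0" using Z vins[OF cv] by (simp add: col_def)
        thus ?thesis unfolding contr_eq mdot_def c_def[symmetric] by simp
      next
        assume "\<exists>k t. null_vec n k \<and>
             (\<forall>as. valid_idx n r as \<longrightarrow>
                T as = k (as ! (i - 1)) * t (take (i - 1) as @ drop i as))"
        then obtain k t where nk: "null_vec n k" and
          Tk: "\<forall>as. valid_idx n r as \<longrightarrow> T as = k (as ! (i - 1)) * t (take (i - 1) as @ drop i as)"
          by blast
        have colk: "col e b = k b * t e" if "valid_idx n m e" "b < n" for e b
          using Tk vins[OF that] ins_at_nth[OF ins_len[OF that(1)]] ins_at_rem[OF ins_len[OF that(1)]]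
          by (simp add: col_def ij(1))
        have "mdot n (col c) (col d) = t c * t d * mdot n k k"
          unfolding mdot_def sum_distrib_left
          by (rule sum.cong) (auto simp: colk[OF cv] colk[OF dv] algebra_simps)
        thus ?thesis using nk unfolding contr_eq null_vec_def c_def d_def by simp
      qed
    qed
  qed
qed

end
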